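(* Let $C\subset Ob(CC(R,LM))$ be closed under $ft$ and $\le$ a transitive relation on $C$ such that $\Gamma\le\Gamma'$ implies $l(\Gamma)=l(\Gamma')$, and such that for $\Gamma,F\in C$ with $ft(\Gamma)\le F$ one has $\sigma(\Gamma,F)\in C$ and $\Gamma\le\sigma(\Gamma,F)$. Then: (1) if $(\Gamma,T),(\Gamma,T')\in C$, $(\Gamma,T)\le(\Gamma,T')$ and $\Gamma\le\Gamma'$, then $(\Gamma,T)\le(\Gamma',T')$; (2) if moreover $\le$ is symmetric and $ft$-monotone (i.e. $\Gamma\le\Gamma'$ implies $ft(\Gamma)\le ft(\Gamma')$), then $(\Gamma,T)\le(\Gamma',T')$ implies $(\Gamma,T)\le(\Gamma,T')$.
   Context: $[n]=\{1,\dots,n\}$; $R$ is a monad on Sets and $LM$ a left $R$-module with values in Sets. $Ob(CC(R,LM))$ is the set of finite sequences $(T_1,\dots,T_n)$ with $T_j\in LM([j-1])$; $l$ is length; $ft$ drops the last entry ($ft()=()$); $(\Gamma,T)$ denotes the sequence $\Gamma$ extended by $T$. For $\Gamma=(T_1,\dots,T_{n+k})$, $k>0$, and $\Gamma'=(T'_1,\dots,T'_n)$: $\sigma(\Gamma,\Gamma')=(T'_1,\dots,T'_n,T_{n+1},\dots,T_{n+k})$. *)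

theory Defs
  imports Main
begin

text \<open>The family LM is given by its values on the standard
finite sets: LMn n stands for LM([n]) (all embedded in one carrier type 'a).
A sequence (T_1,...,T_n) is a list ts with ts!(j-1) in LM([j-1]), i.e. ts!i in LMn i.\<close>
definition CC_Ob :: "(nat \<Rightarrow> 'a set) \<Rightarrow> 'a list set" where
  "CC_Ob LMn = {ts. \<forall>i < length ts. ts ! i \<in> LMn i}"

definition ft :: "'a list \<Rightarrow> 'a list" where
  "ft G = butlast G"

text \<open>sigma(Gamma, Gamma') for l(Gamma) = n + k and l(Gamma') = n:
replace the first n entries of Gamma by Gamma'.\<close>
definition sigma :: "'a list \<Rightarrow> 'a list \<Rightarrow> 'a list" where
  "sigma G G' = G' @ drop (length G') G"

end

theory Submission
  imports Defs
begin

theorem lemma6p8: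
  fixes LMn :: "nat \<Rightarrow> 'a set"
    and C :: "'a list set"
    and le :: "'a list \<Rightarrow> 'a list \<Rightarrow> bool"
  assumes C_sub: "C \<subseteq> CC_Ob LMn"
    and C_ft: "\<And>G. G \<in> C \<Longrightarrow> ft G \<in> C"
    and le_on_C: "\<And>G G'. le G G' \<Longrightarrow> G \<in> C \<and> G' \<in> C"
    and le_trans: "\<And>G1 G2 G3. \<lbrakk>G1 \<in> C; G2 \<in> C; G3 \<in> C; le G1 G2; le G2 G3\<rbrakk> \<Longrightarrow> le G1 G3"
    and le_len: "\<And>G G'. le G G' \<Longrightarrow> length G = length G'"
    and le_sigma: "\<And>G F. \<lbrakk>G \<in> C; F \<in> C; G \<noteq> []; le (ft G) F\<rbrakk>
                     \<Longrightarrow> sigma G F \<in> C \<and> le G (sigma G F)"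
  shows "(\<forall>G G' T T'. G @ [T] \<in> C \<and> G @ [T'] \<in> C \<and> le (G @ [T]) (G @ [T']) \<and> le G G'
            \<longrightarrow> le (G @ [T]) (G' @ [T']))
       \<and> ((\<forall>G G'. le G G' \<longrightarrow> le G' G) \<and> (\<forall>G G'. le G G' \<longrightarrow> le (ft G) (ft G'))
            \<longrightarrow> (\<forall>G G' T T'. le (G @ [T]) (G' @ [T']) \<longrightarrow> le (G @ [T]) (G @ [T'])))"
proof (intro conjI impI allI)
  fix G G' T T'
  assume h: "G @ [T] \<in> C \<and> G @ [T'] \<in> C \<and> le (G @ [T]) (G @ [T']) \<and> le G G'"
  have lG: "length G' = length G" using h le_len by (metis length_append_singleton nat.inject)
  have "le (ft (G @ [T'])) G'" using h by (simp add: ft_def)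
  moreover have "G' \<in> C" using h le_on_C by blast
  ultimately have "sigma (G @ [T']) G' \<in> C \<and> le (G @ [T']) (sigma (G @ [T']) G')"
    using le_sigma h by blast
  moreover have "sigma (G @ [T']) G' = G' @ [T']" using lG by (simp add: sigma_def)
  ultimately show "le (G @ [T]) (G' @ [T'])" using le_trans h by metis
next
  fix G G' T T'
  assume sy: "(\<forall>G G'. le G G' \<longrightarrow> le G' G) \<and> (\<forall>G G'. le G G' \<longrightarrow> le (ft G) (ft G'))"
    and h: "le (G @ [T]) (G' @ [T'])"
  have lG: "length G' = length G" using h le_len by (metis length_append_singleton nat.inject)
  have "le G G'" using sy h by (metis ft_def butlast_snoc)
  hence "le (ft (G' @ [T'])) G" using sy by (simp add: ft_def)
  moreover have "G \<in> C" using le_on_C \<open>le G G'\<close> by blast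
  moreover have "G' @ [T'] \<in> C" using le_on_C h by blast
  ultimately have "sigma (G' @ [T']) G \<in> C \<and> le (G' @ [T']) (sigma (G' @ [T']) G)"
    using le_sigma by blast
  moreover have "sigma (G' @ [T']) G = G @ [T']" using lG by (simp add: sigma_def)
  moreover have "G @ [T] \<in> C" using le_on_C h by blast
  ultimately show "le (G @ [T]) (G @ [T'])" using le_trans h \<open>G' @ [T'] \<in> C\<close> by metis
qed

end
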